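(* Let $n\ge 1$, let $X\in\mathbb{R}^{n\times n}$ be a symmetric positive definite matrix, let $\Delta T>0$, and for each $i\in\{1,\dots,n\}$ let $\underline{v}_i\le \bar{v}_i$ be real numbers. Consider the closed-loop discrete-time voltage dynamics $$\mathbf{v}(t+1)=\mathbf{v}(t)+\Delta T\, X\,\mathbf{u}(t),\qquad u_i(t)=-g_i(v_i(t)),\quad i=1,\dots,n,\; t=0,1,2,\dots,$$ where each $g_i:\mathbb{R}\to\mathbb{R}$ is continuously differentiable and satisfies $g_i(v_i)=0$ for all $v_i\in[\underline{v}_i,\bar{v}_i]$. Let $\frac{\partial \mathbf{u}}{\partial \mathbf{v}}=-\mathrm{diag}\big(g_1'(v_1),\dots,g_n'(v_n)\big)$. Suppose that, for $v_i$ in $(-\infty,\underline{v}_i]$ and in $[\bar{v}_i,\infty)$ (for each $i$), the derivatives satisfy the matrix inequality $$-\frac{2}{\Delta T}X^{-1}\prec \frac{\partial \mathbf{u}}{\partial \mathbf{v}}\prec 0,$$ and that $\lim_{|v_i|\to\infty}|g_i(v_i)|=\infty$ for every $i$. Then the closed-loop system is voltage stable: for every initial condition $\mathbf{v}(0)\in\mathbb{R}^n$ (and every uncontrollable component $\mathbf{v}^{env}$ of the voltage), $\lim_{t\to\infty}\mathrm{dist}(\mathbf{v}(t),S_v)=0$, where $S_v=\{\mathbf{v}\in\mathbb{R}^n:\underline{v}_i\le v_i\le \bar{v}_i\ \forall i\}$ and $\mathrm{dist}(\mathbf{v},S_v)=\min_{\mathbf{v}'\in S_v}\|\mathbf{v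}-\mathbf{v}'\|$.
   Context: This models voltage control in a (single-phase or three-phase) radial distribution network under the linearized branch flow model $\mathbf{v}=X\mathbf{q}+\mathbf{v}^{env}$, where $\mathbf{v}$ is the vector of squared voltage magnitudes, $\mathbf{q}$ the reactive power injections, $X$ the (positive definite) reactance-based sensitivity matrix, and $\mathbf{v}^{env}$ the uncontrollable part determined by active power injections and the substation voltage. The control $u_i$ is the change of reactive power injection at bus $i$ per step, $q_i(t+1)=q_i(t)+u_i(t)$, computed in a decentralized way from the local voltage $v_i$ only; $\Delta T$ is the sampling time (zero-order hold discretization of $\dot{\mathbf{v}}=X\mathbf{u}$). For symmetric matrices, $A\prec B$ means $B-A$ is positive definite. *)

theory Defs
  imports "HOL-Analysis.Analysis"
begin

definition pos_def_mat :: "real^'n^'n \<Rightarrow> bool" where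
  "pos_def_mat M \<longleftrightarrow> transpose M = M \<and> (\<forall>x. x \<noteq> 0 \<longrightarrow> x \<bullet> (M *v x) > 0)"

definition loewner_less :: "real^'n^'n \<Rightarrow> real^'n^'n \<Rightarrow> bool" where
  "loewner_less A B \<longleftrightarrow> pos_def_mat (B - A)"

definition diag_mat :: "('n::finite \<Rightarrow> real) \<Rightarrow> real^'n^'n" where
  "diag_mat d = (\<chi> i j. if i = j then d i else 0)"

end

theory Submission
  imports Defs
begin
lemma good_point:
  fixes B :: "real set"
  assumes "finite B" "a < b"
  obtains y where "a < y" "y < b" "y \<notin> B"
proof -
  have "infinite ({a<..<b} - B)" using Diff_infinite_finite assms by auto
  then have "{a<..<b} - B \<noteq> {}" by (metis finite.emptyI)
  then obtain y where "y \<in> {a<..<b} - B" by blast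
  then show ?thesis using that by auto
qed

lemma conc:
  fixes f f1 f2 :: "real \<Rightarrow> real" and B :: "real set"
  assumes d1: "\<And>s. (f has_real_derivative f1 s) (at s)"
    and d2: "\<And>s. (f1 has_real_derivative f2 s) (at s)"
    and c2: "continuous_on UNIV f2" and fin: "finite B"
    and neg: "\<And>s. s \<notin> B \<Longrightarrow> f2 s < 0" and f0: "f 0 = 0" and f10: "f1 0 = 0"
  shows "f 1 < 0"
proof -
  have le: "f2 s \<le> 0" for s
  proof (rule ccontr)
    assume "\<not> f2 s \<le> 0"
    then have "s \<in> {x. (\<lambda>_. 0) x < f2 x}" by simp
    moreover have "open {x. (\<lambda>_. 0::real) x < f2 x}"
      by (rule open_Collect_less) (auto intro: c2 continuous_on_const)
    ultimately obtain e where e: "e > 0" "ball s e \<subseteq> {x. 0 < f2 x}"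
      by (metis openE)
    obtain y where y: "s < y" "y < s + e" "y \<notin> B" using good_point[OF fin, of s "s+e"] e by auto
    have "y \<in> ball s e" using y by (auto simp: dist_real_def)
    then have "f2 y > 0" using e by auto
    with neg[OF y(3)] show False by simp
  qed
  have f1_le: "f1 s \<le> 0" if "s \<ge> 0" for s
    using deriv_nonpos_imp_antimono[of 0 s f1 f2] d2 le that f10 by auto
  have mono: "f b \<le> f a" if "0 \<le> a" "a \<le> b" for a b
    using deriv_nonpos_imp_antimono[of a b f f1] d1 f1_le that by auto
  show ?thesis
  proof (rule ccontr)
    assume "\<not> f 1 < 0"
    then have z: "f s = 0" if "0 \<le> s" "s \<le> 1" for s
      using mono[of 0 s] mono[of s 1] that f0 by auto
    have z1: "f1 s = 0" if "0 < s" "s < 1" for s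
    proof (rule DERIV_local_const[OF d1[of s], of "min s (1 - s)"])
      show "0 < min s (1 - s)" using that by auto
      show "\<forall>y. \<bar>s - y\<bar> < min s (1 - s) \<longrightarrow> f s = f y"
        using z that by (auto simp: abs_if split: if_splits)
    qed
    obtain y where y: "0 < y" "y < 1" "y \<notin> B" using good_point[OF fin, of 0 1] by auto
    have "f2 y = 0"
    proof (rule DERIV_local_const[OF d2[of y], of "min y (1 - y)"])
      show "0 < min y (1 - y)" using y by auto
      show "\<forall>x. \<bar>y - x\<bar> < min y (1 - y) \<longrightarrow> f1 y = f1 x"
        using z1 y by (auto simp: abs_if split: if_splits)
    qed
    with neg[OF y(3)] show False by simp
  qed
qed

lemma diag_mult: "(diag_mat d *v x) $ i = d i * x $ i"
proof -
  have "(diag_mat d *v x) $ i = (\<Sum>j\<in>UNIV. (if i = j then d i else 0) * x $ j)"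
    by (simp add: diag_mat_def matrix_vector_mult_def)
  also have "\<dots> = (\<Sum>j\<in>UNIV. if i = j then d i * x $ j else 0)"
    by (rule sum.cong) auto
  finally show ?thesis by simp
qed

lemma sum_axis: "(\<Sum>j\<in>UNIV. c j * ((axis i (1::real)) $ j)^2) = c i"
proof -
  have "\<And>j. c j * ((axis i (1::real)) $ j)^2 = (if i = j then c i else 0)" by (auto simp: axis_def)
  then show ?thesis by simp
qed

lemma diag_quad: "x \<bullet> (diag_mat d *v x) = (\<Sum>i\<in>UNIV. d i * (x$i)^2)"
  by (simp add: inner_vec_def diag_mult power2_eq_square mult.commute mult.left_commute)

lemma pd_inj: "pos_def_mat X \<Longrightarrow> X *v x = 0 \<Longrightarrow> x = 0"
  unfolding pos_def_mat_def by (metis inner_zero_right less_irrefl)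

lemma inv_left: assumes "pos_def_mat (X::real^'n^'n)" shows "matrix_inv X ** X = mat 1"
proof -
  have "\<exists>B. B ** X = mat 1" using pd_inj[OF assms] matrix_left_invertible_ker by blast
  then have "invertible X" using invertible_left_inverse by blast
  then show ?thesis unfolding invertible_def matrix_inv_def by (metis (mono_tags, lifting) someI_ex)
qed

context
  fixes X :: "real^'n^'n"
    and dT :: real
    and lo hi :: "'n \<Rightarrow> real"
    and g g' :: "'n \<Rightarrow> real \<Rightarrow> real"
  assumes X_pd: "pos_def_mat X"
    and dT_pos: "dT > 0"
    and lo_hi: "\<And>i. lo i \<le> hi i"
    and g_deriv: "\<And>i x. (g i has_real_derivative g' i x) (at x)"
    and g'_cont: "\<And>i. continuous_on UNIV (g' i)"
    and g_dead: "\<And>i x. lo i \<le> x \<Longrightarrow> x \<le> hi i \<Longrightarrow> g i x = 0"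
    and deriv_bounds: "\<And>w. (\<forall>i. w $ i < lo i \<or> w $ i > hi i) \<Longrightarrow>
         loewner_less (- ((2 / dT) *\<^sub>R matrix_inv X)) (- diag_mat (\<lambda>i. g' i (w $ i)))
       \<and> loewner_less (- diag_mat (\<lambda>i. g' i (w $ i))) 0"
begin

lemma g'_pos: assumes "x < lo i \<or> x > hi i" shows "g' i x > 0"
proof -
  define w where "w = (\<chi> j. if j = i then x else hi j + 1)"
  have out: "\<forall>j. w $ j < lo j \<or> w $ j > hi j" using assms by (auto simp: w_def)
  have "pos_def_mat (0 - - diag_mat (\<lambda>i. g' i (w $ i)))"
    using deriv_bounds[OF out] unfolding loewner_less_def by blast
  then have "axis i 1 \<bullet> (diag_mat (\<lambda>i. g' i (w $ i)) *v axis i 1) > 0"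
    unfolding pos_def_mat_def by (simp add: axis_eq_0_iff)
  then show ?thesis by (simp only: diag_quad sum_axis) (simp add: w_def)
qed

lemma quad_bound:
  assumes out: "\<forall>i. w $ i < lo i \<or> w $ i > hi i" and x: "x \<noteq> 0"
  shows "(\<Sum>i\<in>UNIV. g' i (w$i) * (x$i)^2) < (2/dT) * (x \<bullet> (matrix_inv X *v x))"
proof -
  have "pos_def_mat (- diag_mat (\<lambda>i. g' i (w $ i)) - - ((2 / dT) *\<^sub>R matrix_inv X))"
    using deriv_bounds[OF out] unfolding loewner_less_def by blast
  then have "x \<bullet> ((- diag_mat (\<lambda>i. g' i (w $ i)) - - ((2 / dT) *\<^sub>R matrix_inv X)) *v x) > 0"
    unfolding pos_def_mat_def using x by blast
  then have "x \<bullet> ((2 / dT) *\<^sub>R (matrix_inv X *v x)) - x \<bullet> (diag_mat (\<lambda>i. g' i (w $ i)) *v x) > 0"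
    by (simp add: algebra_simps scaleR_matrix_vector_assoc inner_diff_right)
  then show ?thesis by (simp add: diag_quad)
qed

lemma g'_zero: assumes "lo i < x" "x < hi i" shows "g' i x = 0"
proof (rule DERIV_local_const[OF g_deriv[of i x], of "min (x - lo i) (hi i - x)"])
  show "0 < min (x - lo i) (hi i - x)" using assms by auto
  show "\<forall>y. \<bar>x - y\<bar> < min (x - lo i) (hi i - x) \<longrightarrow> g i x = g i y"
    using assms g_dead by (auto simp: abs_if split: if_splits)
qed

lemma g_pos: assumes "x > hi i" shows "g i x > 0"
proof -
  obtain z where z: "hi i < z" "z < x" "g i x - g i (hi i) = (x - hi i) * g' i z"
    using MVT2[of "hi i" x "g i" "g' i"] assms g_deriv by blast
  have "g' i z > 0" using g'_pos z by auto
  moreover have "g i (hi i) = 0" using g_dead lo_hi by auto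
  ultimately show ?thesis using z assms by (simp add: mult_pos_pos)
qed

lemma g_neg: assumes "x < lo i" shows "g i x < 0"
proof -
  obtain z where z: "x < z" "z < lo i" "g i (lo i) - g i x = (lo i - x) * g' i z"
    using MVT2[of x "lo i" "g i" "g' i"] assms g_deriv by blast
  have "g' i z > 0" using g'_pos z by auto
  moreover have "g i (lo i) = 0" using g_dead lo_hi by auto
  moreover have "(lo i - x) * g' i z > 0" using \<open>g' i z > 0\<close> z by simp
  ultimately show ?thesis using z by linarith
qed


lemma descent:
  fixes G :: "'n \<Rightarrow> real \<Rightarrow> real" and w :: "real^'n"
  assumes G_deriv: "\<And>i x. (G i has_real_derivative g i x) (at x)"
    and notS: "\<not> (\<forall>i. lo i \<le> w $ i \<and> w $ i \<le> hi i)"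
  shows "(\<Sum>i\<in>UNIV. G i ((w + dT *\<^sub>R (X *v (\<chi> i. - g i (w $ i)))) $ i)) < (\<Sum>i\<in>UNIV. G i (w $ i))"
proof -
  define \<gamma> where "\<gamma> = (\<chi> i. g i (w $ i))"
  define \<Delta> where "\<Delta> = dT *\<^sub>R (X *v (\<chi> i. - g i (w $ i)))"
  define M where "M = matrix_inv X"
  have "(\<chi> i. - g i (w $ i)) = (-1::real) *\<^sub>R \<gamma>" by (simp add: \<gamma>_def vec_eq_iff)
  moreover have "X *v (- \<gamma>) = - (X *v \<gamma>)" using matrix_vector_mult_diff_distrib[of X 0 \<gamma>] by simp
  ultimately have \<Delta>_eq: "\<Delta> = (- dT) *\<^sub>R (X *v \<gamma>)" by (simp add: \<Delta>_def)
  obtain i0 where i0: "w $ i0 < lo i0 \<or> w $ i0 > hi i0" using notS by (meson not_le)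
  have "\<gamma> $ i0 \<noteq> 0" using g_pos g_neg i0 unfolding \<gamma>_def by (metis less_irrefl vec_lambda_beta)
  then have "\<gamma> \<noteq> 0" by auto
  define q where "q = \<gamma> \<bullet> (X *v \<gamma>)"
  have q_pos: "q > 0" using X_pd \<open>\<gamma> \<noteq> 0\<close> unfolding pos_def_mat_def q_def by blast
  have "X *v \<gamma> \<noteq> 0" using q_pos unfolding q_def by auto
  then have \<Delta>_nz: "\<Delta> \<noteq> 0" using dT_pos \<Delta>_eq by simp
  have M\<Delta>: "M *v \<Delta> = (- dT) *\<^sub>R \<gamma>"
  proof -
    have "M *v \<Delta> = (- dT) *\<^sub>R (M *v (X *v \<gamma>))"
      unfolding \<Delta>_eq by (rule matrix_vector_mult_scaleR)
    also have "M *v (X *v \<gamma>) = \<gamma>"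
      by (simp add: M_def matrix_vector_mul_assoc inv_left[OF X_pd])
    finally show ?thesis .
  qed
  have quadM: "\<Delta> \<bullet> (M *v \<Delta>) = dT^2 * q"
    unfolding M\<Delta> unfolding \<Delta>_eq by (simp add: q_def inner_commute power2_eq_square)
  have g\<Delta>: "(\<Sum>i\<in>UNIV. g i (w $ i) * \<Delta> $ i) = - dT * q"
  proof -
    have "(\<Sum>i\<in>UNIV. g i (w $ i) * \<Delta> $ i) = \<gamma> \<bullet> \<Delta>" by (simp add: inner_vec_def \<gamma>_def)
    also have "\<dots> = - dT * q" by (simp add: \<Delta>_eq q_def)
    finally show ?thesis .
  qed
  define \<phi> where "\<phi> s = (\<Sum>i\<in>UNIV. G i (w $ i + s * \<Delta> $ i))" for s
  define \<phi>1 where "\<phi>1 s = (\<Sum>i\<in>UNIV. g i (w $ i + s * \<Delta> $ i) * \<Delta> $ i)" for s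
  define \<phi>2 where "\<phi>2 s = (\<Sum>i\<in>UNIV. g' i (w $ i + s * \<Delta> $ i) * (\<Delta> $ i)^2)" for s
  have lin: "((\<lambda>s. w $ i + s * \<Delta> $ i) has_real_derivative \<Delta> $ i) (at s)" for i s
    by (auto intro!: derivative_eq_intros)
  have d\<phi>: "(\<phi> has_real_derivative \<phi>1 s) (at s)" for s
    unfolding \<phi>_def \<phi>1_def
    by (rule DERIV_sum, rule DERIV_chain2[OF G_deriv lin])
  have d\<phi>1: "(\<phi>1 has_real_derivative \<phi>2 s) (at s)" for s
    unfolding \<phi>1_def \<phi>2_def
  proof (rule DERIV_sum)
    fix i
    show "((\<lambda>s. g i (w $ i + s * \<Delta> $ i) * \<Delta> $ i) has_real_derivative g' i (w $ i + s * \<Delta> $ i) * (\<Delta> $ i)\<^sup>2) (at s)"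
      using DERIV_cmult_right[OF DERIV_chain2[OF g_deriv lin], where c="\<Delta> $ i"]
      by (simp add: power2_eq_square mult.assoc)
  qed
  have c\<phi>2: "continuous_on UNIV \<phi>2"
    unfolding \<phi>2_def
  proof (intro continuous_on_sum continuous_on_mult continuous_on_const)
    fix i
    show "continuous_on UNIV (\<lambda>s. g' i (w $ i + s * \<Delta> $ i))"
      by (rule continuous_on_compose2[OF g'_cont]) (auto intro!: continuous_intros)
  qed
  define B where "B = (\<Union>i. {(lo i - w $ i) / \<Delta> $ i, (hi i - w $ i) / \<Delta> $ i})"
  have finB: "finite B" unfolding B_def by simp
  have neg: "\<phi>2 s < 2 * dT * q" if sB: "s \<notin> B" for s
  proof -
    define u where "u = (\<chi> i. if w $ i + s * \<Delta> $ i < lo i \<or> w $ i + s * \<Delta> $ i > hi i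
                                then w $ i + s * \<Delta> $ i else hi i + 1)"
    have out: "\<forall>i. u $ i < lo i \<or> u $ i > hi i" using lo_hi by (auto simp: u_def)
    have "\<phi>2 s \<le> (\<Sum>i\<in>UNIV. g' i (u $ i) * (\<Delta> $ i)^2)"
      unfolding \<phi>2_def
    proof (rule sum_mono)
      fix i
      let ?x = "w $ i + s * \<Delta> $ i"
      show "g' i ?x * (\<Delta> $ i)\<^sup>2 \<le> g' i (u $ i) * (\<Delta> $ i)\<^sup>2"
      proof (cases "\<Delta> $ i = 0")
        case True then show ?thesis by simp
      next
        case False
        show ?thesis
        proof (cases "?x < lo i \<or> ?x > hi i")
          case True then show ?thesis by (simp add: u_def)
        next
          case F2: False
          have "?x \<noteq> lo i"
          proof
            assume "?x = lo i"
            then have "s = (lo i - w $ i) / \<Delta> $ i" using False by (simp add: field_simps)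
            then show False using sB unfolding B_def by auto
          qed
          moreover have "?x \<noteq> hi i"
          proof
            assume "?x = hi i"
            then have "s = (hi i - w $ i) / \<Delta> $ i" using False by (simp add: field_simps)
            then show False using sB unfolding B_def by auto
          qed
          ultimately have "g' i ?x = 0" using F2 g'_zero by force
          moreover have "g' i (u $ i) > 0" using g'_pos out by blast
          ultimately show ?thesis by simp
        qed
      qed
    qed
    also have "\<dots> < (2/dT) * (\<Delta> \<bullet> (M *v \<Delta>))"
      unfolding M_def by (rule quad_bound[OF out \<Delta>_nz])
    also have "\<dots> = 2 * dT * q" using dT_pos by (simp add: quadM power2_eq_square)
    finally show ?thesis .
  qed
  define f where "f s = \<phi> s - \<phi> 0 + dT * q * s - dT * q * s^2" for s
  define f1 where "f1 s = \<phi>1 s + dT * q - 2 * dT * q * s" for s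
  define f2 where "f2 s = \<phi>2 s - 2 * dT * q" for s
  have "f 1 < 0"
  proof (rule conc[of f f1 f2 B])
    show "(f has_real_derivative f1 s) (at s)" for s
      unfolding f_def f1_def by (auto intro!: derivative_eq_intros d\<phi>)
    show "(f1 has_real_derivative f2 s) (at s)" for s
      unfolding f1_def f2_def by (auto intro!: derivative_eq_intros d\<phi>1)
    show "continuous_on UNIV f2" unfolding f2_def by (intro continuous_intros c\<phi>2)
    show "finite B" by (rule finB)
    show "f2 s < 0" if "s \<notin> B" for s using neg[OF that] by (simp add: f2_def)
    show "f 0 = 0" by (simp add: f_def)
    show "f1 0 = 0" by (simp add: f1_def \<phi>1_def g\<Delta>)
  qed
  then have "\<phi> 1 < \<phi> 0" by (simp add: f_def)
  then show ?thesis by (simp add: \<phi>_def \<Delta>_def)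
qed

end
theorem theorem1:
  fixes X :: "real^'n^'n"
    and dT :: real
    and lo hi :: "'n \<Rightarrow> real"
    and g g' :: "'n \<Rightarrow> real \<Rightarrow> real"
    and v :: "nat \<Rightarrow> real^'n"
  assumes X_pd: "pos_def_mat X"
    and dT_pos: "dT > 0"
    and lo_hi: "\<And>i. lo i \<le> hi i"
    and g_deriv: "\<And>i x. (g i has_real_derivative g' i x) (at x)"
    and g'_cont: "\<And>i. continuous_on UNIV (g' i)"
    and g_dead: "\<And>i x. lo i \<le> x \<Longrightarrow> x \<le> hi i \<Longrightarrow> g i x = 0"
    and deriv_bounds: "\<And>w. (\<forall>i. w $ i < lo i \<or> w $ i > hi i) \<Longrightarrow>
         loewner_less (- ((2 / dT) *\<^sub>R matrix_inv X)) (- diag_mat (\<lambda>i. g' i (w $ i)))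
       \<and> loewner_less (- diag_mat (\<lambda>i. g' i (w $ i))) 0"
    and g_infty: "\<And>i. filterlim (\<lambda>x. \<bar>g i x\<bar>) at_top at_infinity"
    and dyn: "\<And>t. v (Suc t) = v t + dT *\<^sub>R (X *v (\<chi> i. - g i (v t $ i)))"
  shows "((\<lambda>t. infdist (v t) {w. \<forall>i. lo i \<le> w $ i \<and> w $ i \<le> hi i}) \<longlongrightarrow> 0) sequentially"
proof -
  note ctx = X_pd dT_pos lo_hi g_deriv g'_cont g_dead deriv_bounds
  have "\<exists>F. \<forall>x. (F has_real_derivative g i x) (at x)" for i
  proof -
    have "\<exists>F. \<forall>x :: real. -\<infinity> < x \<longrightarrow> x < \<infinity> \<longrightarrow> (F has_vector_derivative g i x) (at x)"
      by (rule einterval_antiderivative) (auto intro: DERIV_isCont[OF g_deriv])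
    then show ?thesis by (auto simp: has_real_derivative_iff_has_vector_derivative)
  qed
  then obtain F where F: "\<And>i x. (F i has_real_derivative g i x) (at x)" by metis
  define G where "G i x = F i x - F i (lo i)" for i x
  have G_deriv: "(G i has_real_derivative g i x) (at x)" for i x
    unfolding G_def by (auto intro!: derivative_eq_intros F)
  have G_cont: "continuous_on UNIV (G i)" for i
    by (rule continuous_at_imp_continuous_on) (auto intro: DERIV_isCont[OF G_deriv])
  have g_ge: "g i y \<ge> 0" if "y \<ge> lo i" for i y
    using g_pos[OF ctx, where x=y and i=i] g_dead[of i y] that by force
  have g_le: "g i y \<le> 0" if "y \<le> lo i" for i y
    using g_neg[OF ctx, where x=y and i=i] g_dead[of i y] that lo_hi[of i] by force
  have G_nonneg: "G i x \<ge> 0" for i x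
  proof (cases "x \<ge> lo i")
    case True
    have "G i (lo i) \<le> G i x"
      using deriv_nonneg_imp_mono[of "lo i" x "G i" "g i"] G_deriv g_ge True by auto
    then show ?thesis by (simp add: G_def)
  next
    case False
    have "G i (lo i) \<le> G i x"
      using deriv_nonpos_imp_antimono[of x "lo i" "G i" "g i"] G_deriv g_le False by auto
    then show ?thesis by (simp add: G_def)
  qed
  have coerc: "\<exists>R. \<forall>x. G i x \<le> C \<longrightarrow> \<bar>x\<bar> \<le> R" for i C
  proof -
    have "\<forall>\<^sub>F x in at_infinity. 1 \<le> \<bar>g i x\<bar>"
      using g_infty[of i] unfolding filterlim_at_top by blast
    then obtain b where b: "\<And>x. b \<le> norm x \<Longrightarrow> 1 \<le> \<bar>g i x\<bar>"
      unfolding eventually_at_infinity by blast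
    define R0 where "R0 = max b (\<bar>lo i\<bar> + \<bar>hi i\<bar> + 1)"
    have up: "x \<le> R0 + C" if "G i x \<le> C" "x \<ge> R0" for x
    proof -
      have "(\<lambda>y. G i y - y) R0 \<le> (\<lambda>y. G i y - y) x"
      proof (rule deriv_nonneg_imp_mono[of R0 x _ "\<lambda>y. g i y - 1"])
        show "((\<lambda>y. G i y - y) has_real_derivative g i y - 1) (at y)" for y
          by (auto intro!: derivative_eq_intros G_deriv)
        fix y assume y: "y \<in> {R0..x}"
        then have "1 \<le> \<bar>g i y\<bar>" using b[of y] by (auto simp: R0_def)
        moreover have "g i y \<ge> 0" using g_ge y lo_hi[of i] by (auto simp: R0_def)
        ultimately show "0 \<le> g i y - 1" by simp
      qed (use that in auto)
      then show ?thesis using G_nonneg[of i R0] that by simp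
    qed
    have down: "- x \<le> R0 + C" if "G i x \<le> C" "x \<le> - R0" for x
    proof -
      have "(\<lambda>y. G i y + y) (- R0) \<le> (\<lambda>y. G i y + y) x"
      proof (rule deriv_nonpos_imp_antimono[of x "- R0" _ "\<lambda>y. g i y + 1"])
        show "((\<lambda>y. G i y + y) has_real_derivative g i y + 1) (at y)" for y
          by (auto intro!: derivative_eq_intros G_deriv)
        fix y assume y: "y \<in> {x..- R0}"
        then have "1 \<le> \<bar>g i y\<bar>" using b[of y] by (auto simp: R0_def)
        moreover have "g i y \<le> 0" using g_le y lo_hi[of i] by (auto simp: R0_def)
        ultimately show "g i y + 1 \<le> 0" by simp
      qed (use that in auto)
      then show ?thesis using G_nonneg[of i "- R0"] that by simp
    qed
    show ?thesis
    proof (intro exI allI impI)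
      fix x assume "G i x \<le> C"
      then show "\<bar>x\<bar> \<le> R0 + C" using up[of x] down[of x] G_nonneg[of i x] 
        by (cases "x \<ge> R0"; cases "x \<le> - R0") (auto simp: R0_def)
    qed
  qed
  define S where "S = {w::real^'n. \<forall>i. lo i \<le> w $ i \<and> w $ i \<le> hi i}"
  define V where "V w = (\<Sum>i\<in>UNIV. G i (w $ i))" for w :: "real^'n"
  define h where "h w = w + dT *\<^sub>R (X *v (\<chi> i. - g i (w $ i)))" for w :: "real^'n"
  have V_nonneg: "V w \<ge> 0" for w unfolding V_def by (intro sum_nonneg G_nonneg)
  have V_strict: "V (h w) < V w" if "w \<notin> S" for w
    using descent[where X=X and dT=dT and lo=lo and hi=hi and g=g and g'=g' and w=w, OF ctx G_deriv] that unfolding V_def h_def S_def by blast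
  have h_S: "h w = w" if "w \<in> S" for w
  proof -
    have "(\<chi> i. - g i (w $ i)) = 0" using that g_dead by (auto simp: S_def vec_eq_iff)
    then show ?thesis by (simp add: h_def)
  qed
  have V_dec: "V (h w) \<le> V w" for w
    using V_strict[of w] h_S[of w] by (cases "w \<in> S") auto
  have V_cont: "continuous_on UNIV V"
    unfolding V_def
    by (intro continuous_on_sum continuous_on_compose2[OF G_cont] continuous_intros) auto
  have g_cont: "continuous_on UNIV (g i)" for i
    by (rule continuous_at_imp_continuous_on) (auto intro: DERIV_isCont[OF g_deriv])
  have c1: "continuous_on UNIV (\<lambda>w::real^'n. (\<chi> i. - g i (w $ i)))"
    by (intro continuous_on_vec_lambda continuous_on_minus continuous_on_compose2[OF g_cont] continuous_intros) auto
  have c2: "continuous_on UNIV ((\<lambda>y. X *v y) \<circ> (\<lambda>w::real^'n. (\<chi> i. - g i (w $ i))))"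
    by (rule continuous_on_compose[OF c1]) (rule matrix_vector_mult_linear_continuous_on)
  have h_cont: "continuous_on UNIV h"
    unfolding h_def using c2 unfolding o_def
    by (intro continuous_intros) auto
  have vS: "v (Suc t) = h (v t)" for t by (simp add: dyn h_def)
  have Vv_dec: "V (v (Suc t)) \<le> V (v t)" for t using vS V_dec by simp
  have Vv_le: "V (v t) \<le> V (v 0)" for t
    by (induction t) (auto intro: order_trans[OF Vv_dec])
  define C0 where "C0 = V (v 0)"
  have "\<forall>i. \<exists>R. \<forall>x. G i x \<le> C0 \<longrightarrow> \<bar>x\<bar> \<le> R" using coerc by blast
  then obtain Rf where Rf: "\<And>i x. G i x \<le> C0 \<Longrightarrow> \<bar>x\<bar> \<le> Rf i" by metis
  define lb where "lb = (\<chi> i. - Rf i)"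
  define ub where "ub = (\<chi> i. Rf i)"
  have v_box: "v t \<in> cbox lb ub" for t
  proof -
    have "G i (v t $ i) \<le> C0" for i
    proof -
      have "G i (v t $ i) \<le> V (v t)" unfolding V_def
        by (rule member_le_sum) (auto intro: G_nonneg)
      then show ?thesis using Vv_le[of t] by (simp add: C0_def)
    qed
    then have "\<bar>v t $ i\<bar> \<le> Rf i" for i using Rf by blast
    then show ?thesis unfolding mem_box_cart lb_def ub_def by (simp add: abs_le_iff) (metis minus_le_iff)
  qed
  have "decseq (\<lambda>t. V (v t))" using Vv_dec by (simp add: decseq_SucI)
  then obtain L where L: "(\<lambda>t. V (v t)) \<longlonglongrightarrow> L"
    using decseq_convergent[of "\<lambda>t. V (v t)" 0] V_nonneg by blast
  have diff0: "(\<lambda>t. V (v t) - V (v (Suc t))) \<longlonglongrightarrow> 0"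
    using tendsto_diff[OF L LIMSEQ_Suc[OF L]] by simp
  show ?thesis
  proof (rule order_tendstoI)
    fix a :: real assume "a < 0"
    then show "\<forall>\<^sub>F t in sequentially. a < infdist (v t) {w. \<forall>i. lo i \<le> w $ i \<and> w $ i \<le> hi i}"
      using infdist_nonneg less_le_trans by (intro always_eventually allI) blast
  next
    fix e :: real assume e: "e > 0"
    define K where "K = cbox lb ub \<inter> {w. e \<le> infdist w S}"
    have K_comp: "compact K" unfolding K_def
      by (intro compact_Int_closed compact_cbox closed_Collect_le continuous_intros)
    show "\<forall>\<^sub>F t in sequentially. infdist (v t) {w. \<forall>i. lo i \<le> w $ i \<and> w $ i \<le> hi i} < e"
    proof (cases "K = {}")
      case True
      then have "infdist (v t) {w. \<forall>i. lo i \<le> w $ i \<and> w $ i \<le> hi i} < e" for t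
        using v_box[of t] unfolding K_def S_def by (auto simp: not_le)
      then show ?thesis by (intro always_eventually allI)
    next
      case False
      have "continuous_on UNIV (V \<circ> h)"
        by (rule continuous_on_compose[OF h_cont]) (rule continuous_on_subset[OF V_cont], simp)
      then have "continuous_on K (V \<circ> h)" by (rule continuous_on_subset) simp
      then have "continuous_on K (\<lambda>w. V w - V (h w))"
        unfolding o_def by (intro continuous_on_diff continuous_on_subset[OF V_cont]) auto
      then obtain w0 where w0: "w0 \<in> K" "\<And>y. y \<in> K \<Longrightarrow> V w0 - V (h w0) \<le> V y - V (h y)"
        using continuous_attains_inf[OF K_comp False] by blast
      have "w0 \<notin> S" using w0(1) e unfolding K_def by auto
      then have \<delta>: "V w0 - V (h w0) > 0" using V_strict by simp
      have "\<forall>\<^sub>F t in sequentially. V (v t) - V (v (Suc t)) < V w0 - V (h w0)"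
        using order_tendstoD(2)[OF diff0 \<delta>] .
      then show ?thesis
      proof (rule eventually_mono)
        fix t assume lt: "V (v t) - V (v (Suc t)) < V w0 - V (h w0)"
        show "infdist (v t) {w. \<forall>i. lo i \<le> w $ i \<and> w $ i \<le> hi i} < e"
        proof (rule ccontr)
          assume "\<not> ?thesis"
          then have "v t \<in> K" using v_box unfolding K_def S_def by auto
          then have "V w0 - V (h w0) \<le> V (v t) - V (v (Suc t))" using w0(2) vS by simp
          with lt show False by simp
        qed
      qed
    qed
  qed
qed

end
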